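(* Let $\Theta\subseteq\mathbb{R}^p$ be open, $U_\theta$ a differentiable family of $D\times D$ unitary matrices, and $\rho_0=|\psi_0\rangle\langle\psi_0|$ a pure state on $\mathbb{C}^D$. For the unitary channel $\rho\mapsto U_\theta\rho U_\theta^\dagger$ with canonical Kraus operators $\Upsilon_1=U_\theta$, $\Upsilon_k=0$ ($k\ge2$), one has $H_\theta=C_\Upsilon(\theta)$ if and only if $\mathrm{tr}\{U_\theta\rho_0(\frac{\partial U_\theta}{\partial\theta^l})^\dagger\}=0$ for all $l=1,\dots,p$.
   Context: $C_\Upsilon(\theta)$ is the $p\times p$ matrix with entries $4\sum_l\mathrm{Re}\,\mathrm{tr}\{\frac{\partial\Upsilon_l}{\partial\theta^j}\rho_0(\frac{\partial\Upsilon_l}{\partial\theta^k})^\dagger\}$. $H_\theta$ is the SLD quantum information matrix of $\rho_\theta=U_\theta\rho_0U_\theta^\dagger$, with entries $\mathrm{Re}\,\mathrm{tr}\{\lambda^j\rho_\theta\lambda^k\}$, where $\lambda^j$ is a Hermitian solution of $\frac{\partial\rho_\theta}{\partial\theta^j}=\frac12(\rho_\theta\lambda^j+\lambda^j\rho_\theta)$. *)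

theory Defs
  imports "HOL-Analysis.Analysis"
begin

definition adj :: "complex^'n^'n \<Rightarrow> complex^'n^'n" where
  "adj A = (\<chi> i j. cnj (A $ j $ i))"

definition unitary_mat :: "complex^'n^'n \<Rightarrow> bool" where
  "unitary_mat U \<longleftrightarrow> adj U ** U = mat 1 \<and> U ** adj U = mat 1"

definition hermitian_mat :: "complex^'n^'n \<Rightarrow> bool" where
  "hermitian_mat A \<longleftrightarrow> adj A = A"

definition pure_state :: "complex^'n^'n \<Rightarrow> bool" where
  "pure_state \<rho> \<longleftrightarrow> (\<exists>\<psi> :: complex^'n. norm \<psi> = 1 \<and> \<rho> = (\<chi> i j. \<psi> $ i * cnj (\<psi> $ j)))"

definition pdiff :: "(real^'p \<Rightarrow> 'b::real_normed_vector) \<Rightarrow> real^'p \<Rightarrow> 'p \<Rightarrow> 'b" where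
  "pdiff f \<theta> j = frechet_derivative f (at \<theta>) (axis j 1)"

definition rho_out :: "(real^'p \<Rightarrow> complex^'n^'n) \<Rightarrow> complex^'n^'n \<Rightarrow> real^'p \<Rightarrow> complex^'n^'n" where
  "rho_out U \<rho>0 \<theta> = U \<theta> ** \<rho>0 ** adj (U \<theta>)"

definition is_SLD :: "(real^'p \<Rightarrow> complex^'n^'n) \<Rightarrow> real^'p \<Rightarrow> 'p \<Rightarrow> complex^'n^'n \<Rightarrow> bool" where
  "is_SLD \<rho> \<theta> j L \<longleftrightarrow> hermitian_mat L \<and>
     pdiff \<rho> \<theta> j = (1/2::real) *\<^sub>R (\<rho> \<theta> ** L + L ** \<rho> \<theta>)"

definition SLD :: "(real^'p \<Rightarrow> complex^'n^'n) \<Rightarrow> real^'p \<Rightarrow> 'p \<Rightarrow> complex^'n^'n" where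
  "SLD \<rho> \<theta> j = (SOME L. is_SLD \<rho> \<theta> j L)"

definition SLD_QFI :: "(real^'p \<Rightarrow> complex^'n^'n) \<Rightarrow> real^'p \<Rightarrow> real^'p^'p" where
  "SLD_QFI \<rho> \<theta> = (\<chi> j k. Re (trace (SLD \<rho> \<theta> j ** \<rho> \<theta> ** SLD \<rho> \<theta> k)))"

text \<open>C_Upsilon(theta) for Kraus operators Upsilon_0,...,Upsilon_(r-1) (0-based indexing).\<close>
definition C_Kraus :: "nat \<Rightarrow> (nat \<Rightarrow> real^'p \<Rightarrow> complex^'n^'n) \<Rightarrow> complex^'n^'n \<Rightarrow> real^'p \<Rightarrow> real^'p^'p" where
  "C_Kraus r K \<rho>0 \<theta> = (\<chi> j k. 4 * (\<Sum>l<r. Re (trace (pdiff (K l) \<theta> j ** \<rho>0 ** adj (pdiff (K l) \<theta> k)))))"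

definition unitary_kraus :: "(real^'p \<Rightarrow> complex^'n^'n) \<Rightarrow> nat \<Rightarrow> real^'p \<Rightarrow> complex^'n^'n" where
  "unitary_kraus U l = (if l = 0 then U else (\<lambda>_. 0))"

end

theory Submission
  imports Defs
begin

lemma mm_scaleR_left: "((c::real) *\<^sub>R (A::complex^'n^'n)) ** B = c *\<^sub>R (A ** B)"
  by (simp add: vec_eq_iff matrix_matrix_mult_def scaleR_sum_right)
lemma mm_scaleR_right: "(A::complex^'n^'n) ** ((c::real) *\<^sub>R B) = c *\<^sub>R (A ** B)"
  by (simp add: vec_eq_iff matrix_matrix_mult_def scaleR_sum_right)

lemma mm_add_rdistrib: "((A::complex^'n^'n) + B) ** C = A ** C + B ** C"
  by (simp add: vec_eq_iff matrix_matrix_mult_def sum.distrib distrib_right)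

lemma bb_mm: "bounded_bilinear ((**) :: complex^'n^'n \<Rightarrow> complex^'n^'n \<Rightarrow> complex^'n^'n)"
proof -
  have "bilinear ((**) :: complex^'n^'n \<Rightarrow> complex^'n^'n \<Rightarrow> complex^'n^'n)"
    unfolding bilinear_def
    by (auto intro!: linearI simp: matrix_add_ldistrib mm_add_rdistrib mm_scaleR_left mm_scaleR_right)
  then show ?thesis by (simp add: bilinear_conv_bounded_bilinear)
qed

lemma adj_add: "adj (A + B) = adj A + adj B"
  by (simp add: adj_def vec_eq_iff)
lemma adj_scaleR: "adj ((c::real) *\<^sub>R A) = c *\<^sub>R adj A"
  by (simp add: adj_def vec_eq_iff complex_eq_iff)

lemma bl_adj: "bounded_linear (adj :: complex^'n^'n \<Rightarrow> complex^'n^'n)"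
proof -
  have "linear (adj :: complex^'n^'n \<Rightarrow> complex^'n^'n)"
    by (auto intro!: linearI simp: adj_add adj_scaleR)
  then show ?thesis by (simp add: linear_conv_bounded_linear)
qed

definition ip :: "complex^'n \<Rightarrow> complex^'n \<Rightarrow> complex" where
  "ip x y = (\<Sum>i\<in>UNIV. cnj (x$i) * y$i)"
definition outer :: "complex^'n \<Rightarrow> complex^'n \<Rightarrow> complex^'n^'n" where
  "outer u v = (\<chi> i j. u$i * cnj (v$j))"

lemma mm_outer: "X ** outer u v = outer (X *v u) v"
  by (simp add: vec_eq_iff matrix_matrix_mult_def matrix_vector_mult_def outer_def sum_distrib_right mult.assoc)
lemma outer_mm: "outer u v ** Y = outer u (adj Y *v v)"
  by (simp add: vec_eq_iff matrix_matrix_mult_def matrix_vector_mult_def outer_def adj_def sum_distrib_left)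
     (intro allI sum.cong, simp_all add: mult_ac)
lemma trace_outer: "trace (outer u v) = ip v u"
  by (simp add: trace_def outer_def ip_def mult.commute)
lemma outer_mv: "outer u v *v w = (\<chi> i. ip v w * u$i)"
  by (simp add: vec_eq_iff matrix_vector_mult_def outer_def ip_def sum_distrib_left mult_ac)
lemma ip_adj: "ip x (M *v y) = ip (adj M *v x) y"
  by (simp add: ip_def matrix_vector_mult_def adj_def sum_distrib_left sum_distrib_right mult_ac)
   (rule sum.swap)
lemma adj_adj[simp]: "adj (adj M) = M"
  by (simp add: adj_def vec_eq_iff)
lemma adj_outer: "adj (outer u v) = outer v u"
  by (simp add: adj_def outer_def vec_eq_iff)
lemma ip_cnj: "cnj (ip x y) = ip y x"
  by (simp add: ip_def mult.commute)
lemma ip_self: "ip x x = of_real (norm x ^ 2)"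
proof -
  have "norm x ^ 2 = (\<Sum>i\<in>UNIV. (norm (x$i))^2)"
    by (simp add: norm_vec_def L2_set_def sum_nonneg)
  then show ?thesis
    by (simp add: ip_def of_real_sum complex_norm_square[symmetric] mult.commute)
qed
lemma ip_add: "ip x (y + z) = ip x y + ip x z"
  by (simp add: ip_def distrib_left sum.distrib)
lemma ip_expand: "ip (\<chi> i. x$i - s * z$i) (\<chi> i. y$i - t * z$i)
   = ip x y - t * ip x z - cnj s * ip z y + cnj s * t * ip z z"
proof -
  have "\<And>i. cnj (x$i - s * z$i) * (y$i - t * z$i) = cnj (x$i) * y$i - t * (cnj (x$i) * z$i)
     - cnj s * (cnj (z$i) * y$i) + cnj s * t * (cnj (z$i) * z$i)"
    by (simp add: algebra_simps)
  then show ?thesis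
    by (simp add: ip_def sum_subtractf sum.distrib sum_distrib_left)
qed

lemma mm_zero[simp]: "(A::complex^'n^'n) ** 0 = 0"
  by (simp add: vec_eq_iff matrix_matrix_mult_def)
lemma zero_mm[simp]: "(0::complex^'n^'n) ** A = 0"
  by (simp add: vec_eq_iff matrix_matrix_mult_def)
lemma scaleR_mv: "((c::real) *\<^sub>R (M::complex^'n^'n)) *v x = c *\<^sub>R (M *v x)"
  by (simp add: vec_eq_iff matrix_vector_mult_def scaleR_sum_right)
lemma ip_lin: "ip x (\<chi> i. p * y$i + q * z$i) = p * ip x y + q * ip x z"
  by (simp add: ip_def sum.distrib sum_distrib_left algebra_simps)
lemma ip_sl: "ip (\<chi> i. p * x$i) y = cnj p * ip x y"
  by (simp add: ip_def sum_distrib_left algebra_simps)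
lemma ip_sr: "ip x (\<chi> i. q * y$i) = q * ip x y"
  by (simp add: ip_def sum_distrib_left algebra_simps)
lemma ip_expand2: "ip (\<chi> i. p * x$i + s * z$i) (\<chi> i. q * y$i + t * z$i)
   = cnj p * q * ip x y + cnj p * t * ip x z + cnj s * q * ip z y + cnj s * t * ip z z"
proof -
  have "\<And>i. cnj (p * x$i + s * z$i) * (q * y$i + t * z$i) = cnj p * q * (cnj (x$i) * y$i)
     + cnj p * t * (cnj (x$i) * z$i) + cnj s * q * (cnj (z$i) * y$i) + cnj s * t * (cnj (z$i) * z$i)"
    by (simp add: algebra_simps)
  then show ?thesis
    by (simp add: ip_def sum.distrib sum_distrib_left)
qed
lemma chi_id: "(\<chi> i. (1::complex) * x$i) = x"
  by (simp add: vec_eq_iff)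

lemma pdiff_deriv:
  assumes "(f has_derivative f') (at x)"
  shows "pdiff f x l = f' (axis l 1)"
  using frechet_derivative_at[OF assms] by (simp add: pdiff_def)

theorem lemma2p11:
  fixes \<Theta> :: "(real^'p) set"
    and U :: "real^'p \<Rightarrow> complex^'D^'D"
    and \<rho>0 :: "complex^'D^'D"
    and r :: nat
    and \<theta> :: "real^'p"
  assumes "open \<Theta>"
    and "\<forall>\<theta>\<in>\<Theta>. U differentiable (at \<theta>)"
    and "\<forall>\<theta>\<in>\<Theta>. unitary_mat (U \<theta>)"
    and "pure_state \<rho>0"
    and "r \<ge> 1"
    and "\<theta> \<in> \<Theta>"
  shows "SLD_QFI (rho_out U \<rho>0) \<theta> = C_Kraus r (unitary_kraus U) \<rho>0 \<theta>
     \<longleftrightarrow> (\<forall>l. trace (U \<theta> ** \<rho>0 ** adj (pdiff U \<theta> l)) = 0)"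
proof -
  obtain \<psi> :: "complex^'D" where n\<psi>: "norm \<psi> = 1" and r0: "\<rho>0 = outer \<psi> \<psi>"
    using assms(4) unfolding pure_state_def outer_def by blast
  define U' where "U' = frechet_derivative U (at \<theta>)"
  have dU: "(U has_derivative U') (at \<theta>)"
    unfolding U'_def using assms(2,6) frechet_derivative_works by blast
  define A where "A = U \<theta>"
  define B where "B = (\<lambda>l. pdiff U \<theta> l)"
  have B: "B l = U' (axis l 1)" for l
    unfolding B_def by (rule pdiff_deriv[OF dU])
  have uA: "adj A ** A = mat 1" "A ** adj A = mat 1"
    using assms(3,6) by (auto simp: A_def unitary_mat_def)
  define \<phi> where "\<phi> = A *v \<psi>"
  define a where "a = (\<lambda>l. B l *v \<psi>)"
  define c where "c = (\<lambda>l. ip \<phi> (a l))"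
  have skew: "adj A ** B l + adj (B l) ** A = 0" for l
  proof -
    have d1: "((\<lambda>x. adj (U x) ** U x) has_derivative
        (\<lambda>h. adj (U \<theta>) ** U' h + adj (U' h) ** U \<theta>)) (at \<theta>)"
      by (rule bounded_bilinear.FDERIV[OF bb_mm bounded_linear.has_derivative[OF bl_adj dU] dU])
    have d2: "((\<lambda>x. mat 1 :: complex^'D^'D) has_derivative
        (\<lambda>h. adj (U \<theta>) ** U' h + adj (U' h) ** U \<theta>)) (at \<theta>)"
      by (rule has_derivative_transform_within_open[OF d1 assms(1,6)])
        (use assms(3) in \<open>auto simp: unitary_mat_def\<close>)
    have "(\<lambda>h. adj (U \<theta>) ** U' h + adj (U' h) ** U \<theta>) = (\<lambda>h. 0)"
      by (rule has_derivative_unique[OF d2 has_derivative_const])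
    then show ?thesis using B[of l] by (simp add: A_def fun_eq_iff)
  qed
  have cc: "cnj (c l) = - c l" for l
  proof -
    have "c l = ip \<psi> ((adj A ** B l) *v \<psi>)"
      unfolding c_def \<phi>_def a_def
      using ip_adj[of \<psi> "adj A" "B l *v \<psi>"] by (simp add: matrix_vector_mul_assoc)
    moreover have "cnj (c l) = ip \<psi> ((adj (B l) ** A) *v \<psi>)"
    proof -
      have "cnj (c l) = ip (B l *v \<psi>) (A *v \<psi>)" by (simp add: c_def \<phi>_def a_def ip_cnj)
      also have "\<dots> = ip \<psi> (adj (B l) *v (A *v \<psi>))"
        using ip_adj[of \<psi> "adj (B l)" "A *v \<psi>"] by simp
      also have "\<dots> = ip \<psi> ((adj (B l) ** A) *v \<psi>)" by (simp add: matrix_vector_mul_assoc)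
      finally show ?thesis .
    qed
    ultimately have "c l + cnj (c l) = ip \<psi> ((adj A ** B l + adj (B l) ** A) *v \<psi>)"
      by (simp only: ip_add matrix_vector_mult_add_rdistrib)
    also have "\<dots> = 0" by (simp add: skew ip_def)
    finally show ?thesis by (simp add: eq_neg_iff_add_eq_0 add.commute)
  qed
  have pp: "ip \<phi> \<phi> = 1"
  proof -
    have "ip \<phi> \<phi> = ip \<psi> ((adj A ** A) *v \<psi>)"
      unfolding \<phi>_def
      using ip_adj[of \<psi> "adj A" "A *v \<psi>"] by (simp add: matrix_vector_mul_assoc)
    also have "\<dots> = 1" using uA n\<psi> by (simp add: ip_self)
    finally show ?thesis .
  qed
  have rho: "rho_out U \<rho>0 \<theta> = outer \<phi> \<phi>"
    unfolding rho_out_def r0 by (simp add: mm_outer outer_mm A_def \<phi>_def)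
  have ipa: "ip (a l) \<phi> = - c l" for l
    using cc[of l] by (simp add: c_def ip_cnj)
  define D where "D = (\<lambda>l. outer \<phi> (a l) + outer (a l) \<phi>)"
  have dR0: "((\<lambda>x. U x ** \<rho>0 ** adj (U x)) has_derivative
      (\<lambda>h. (U \<theta> ** \<rho>0) ** adj (U' h) + (U \<theta> ** 0 + U' h ** \<rho>0) ** adj (U \<theta>))) (at \<theta>)"
    by (rule bounded_bilinear.FDERIV[OF bb_mm bounded_bilinear.FDERIV[OF bb_mm dU has_derivative_const]
          bounded_linear.has_derivative[OF bl_adj dU]])
  have "rho_out U \<rho>0 = (\<lambda>x. U x ** \<rho>0 ** adj (U x))"
    by (simp add: fun_eq_iff rho_out_def)
  with dR0 have dR: "(rho_out U \<rho>0 has_derivative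
      (\<lambda>h. (U \<theta> ** \<rho>0) ** adj (U' h) + (U \<theta> ** 0 + U' h ** \<rho>0) ** adj (U \<theta>))) (at \<theta>)"
    by simp
  have pD: "pdiff (rho_out U \<rho>0) \<theta> l = D l" for l
    using pdiff_deriv[OF dR, of l] B[of l, symmetric]
    by (simp add: r0 mm_outer outer_mm A_def \<phi>_def a_def D_def add.commute)
  have Dv: "D l *v \<phi> = (\<chi> i. 1 * a l $ i + (- c l) * \<phi> $ i)" for l
    by (simp add: D_def matrix_vector_mult_add_rdistrib outer_mv vec_eq_iff pp ipa c_def)
  have adjD: "adj (D l) = D l" for l
    by (simp add: D_def adj_add adj_outer add.commute)
  have key: "D l = outer \<phi> \<phi> ** D l + D l ** outer \<phi> \<phi>" for l
  proof -
    have "outer \<phi> \<phi> ** D l + D l ** outer \<phi> \<phi> = outer \<phi> (D l *v \<phi>) + outer (D l *v \<phi>) \<phi>"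
      by (simp add: outer_mm mm_outer adjD)
    also have "\<dots> = D l"
      unfolding Dv by (simp add: outer_def D_def vec_eq_iff algebra_simps cc)
    finally show ?thesis by simp
  qed
  have isL: "is_SLD (rho_out U \<rho>0) \<theta> l (SLD (rho_out U \<rho>0) \<theta> l)" for l
  proof -
    have "is_SLD (rho_out U \<rho>0) \<theta> l (2 *\<^sub>R D l)"
      unfolding is_SLD_def hermitian_mat_def
    proof
      show "adj (2 *\<^sub>R D l) = 2 *\<^sub>R D l" by (simp add: adj_scaleR adjD)
      have "(1/2::real) *\<^sub>R (outer \<phi> \<phi> ** (2 *\<^sub>R D l) + (2 *\<^sub>R D l) ** outer \<phi> \<phi>)
          = outer \<phi> \<phi> ** D l + D l ** outer \<phi> \<phi>"
        by (simp add: mm_scaleR_left mm_scaleR_right flip: scaleR_add_right)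
      then show "pdiff (rho_out U \<rho>0) \<theta> l = (1/2::real) *\<^sub>R
          (rho_out U \<rho>0 \<theta> ** (2 *\<^sub>R D l) + (2 *\<^sub>R D l) ** rho_out U \<rho>0 \<theta>)"
        using key[of l] by (simp add: pD rho)
    qed
    then show ?thesis unfolding SLD_def by (rule someI)
  qed
  define L where "L = (\<lambda>l. SLD (rho_out U \<rho>0) \<theta> l)"
  define b where "b = (\<lambda>l. (\<chi> i. 2 * a l $ i) :: complex^'D)"
  have Lv: "L l *v \<phi> = (\<chi> i. 1 * b l $ i + (- 2 * c l) * \<phi> $ i)" for l
  proof -
    define v where "v = L l *v \<phi>"
    define t where "t = ip \<phi> v"
    have eq: "D l = (1/2::real) *\<^sub>R (outer \<phi> \<phi> ** L l + L l ** outer \<phi> \<phi>)"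
      using isL[of l] by (simp add: is_SLD_def pD rho L_def)
    have "D l *v \<phi> = (1/2::real) *\<^sub>R ((outer \<phi> \<phi> ** L l) *v \<phi> + (L l ** outer \<phi> \<phi>) *v \<phi>)"
      by (subst eq) (simp add: scaleR_mv matrix_vector_mult_add_rdistrib)
    also have "\<dots> = (1/2::real) *\<^sub>R ((\<chi> i. t * \<phi> $ i) + v)"
      by (simp add: matrix_vector_mul_assoc[symmetric] outer_mv pp v_def t_def chi_id)
    finally have e2: "\<And>i. a l $ i - c l * \<phi> $ i = (1/2::real) *\<^sub>R (t * \<phi> $ i + v $ i)"
      by (simp add: Dv vec_eq_iff)
    have vv: "v = (\<chi> i. 2 * a l $ i + (- 2 * c l - t) * \<phi> $ i)"
    proof -
      have "v $ i = 2 * a l $ i + (- 2 * c l - t) * \<phi> $ i" for i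
        using e2[of i] by (simp add: complex_eq_iff algebra_simps)
      then show ?thesis by (simp add: vec_eq_iff)
    qed
    have "t = ip \<phi> v" by (simp add: t_def)
    also have "\<dots> = ip \<phi> (\<chi> i. 2 * a l $ i + (- 2 * c l - t) * \<phi> $ i)"
      by (subst vv) (rule refl)
    also have "\<dots> = 2 * c l + (- 2 * c l - t) * 1"
      by (simp only: ip_lin pp c_def)
    finally have "t = 2 * c l + (- 2 * c l - t) * 1" .
    then have t0: "t = 0" by simp
    show ?thesis unfolding v_def[symmetric] vv t0 by (simp add: b_def)
  qed
  have hH: "SLD_QFI (rho_out U \<rho>0) \<theta> $ j $ k = 4 * Re (ip (a k) (a j)) + 4 * Re (c j * c k)" for j k
  proof -
    have herm: "adj (L k) = L k" using isL[of k] by (simp add: is_SLD_def hermitian_mat_def L_def)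
    have "trace (L j ** rho_out U \<rho>0 \<theta> ** L k) = ip (L k *v \<phi>) (L j *v \<phi>)"
      by (simp add: rho mm_outer outer_mm herm trace_outer)
    also have "\<dots> = 4 * ip (a k) (a j) + 4 * (c j * c k)"
    proof -
      have bb: "ip (b k) (b j) = 4 * ip (a k) (a j)" by (simp add: b_def ip_sl ip_sr)
      have bp: "ip (b k) \<phi> = - 2 * c k" by (simp add: b_def ip_sl ipa)
      have pb: "ip \<phi> (b j) = 2 * c j" by (simp add: b_def ip_sr c_def)
      show ?thesis unfolding Lv ip_expand2 bb bp pb pp
        using cc[of k] by (simp add: algebra_simps)
    qed
    finally show ?thesis by (simp add: SLD_QFI_def L_def)
  qed
  have p0: "pdiff (\<lambda>_. 0 :: complex^'D^'D) \<theta> j = 0" for j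
    using pdiff_deriv[OF has_derivative_const, of "0 :: complex^'D^'D" \<theta> j] by simp
  have adj0: "adj (0::complex^'D^'D) = 0" by (simp add: adj_def vec_eq_iff)
  have trace0: "trace (0::complex^'D^'D) = 0" by (simp add: trace_def)
  have hC: "C_Kraus r (unitary_kraus U) \<rho>0 \<theta> $ j $ k = 4 * Re (ip (a k) (a j))" for j k
  proof -
    have t: "Re (trace (pdiff (unitary_kraus U l) \<theta> j ** \<rho>0 ** adj (pdiff (unitary_kraus U l) \<theta> k)))
        = (if l = 0 then Re (ip (a k) (a j)) else 0)" for l
    proof (cases "l = 0")
      case True
      have "trace (B j ** \<rho>0 ** adj (B k)) = ip (a k) (a j)"
        by (simp add: r0 mm_outer outer_mm trace_outer a_def)
      then show ?thesis using True by (simp add: unitary_kraus_def B_def)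
    next
      case False
      then show ?thesis by (simp add: unitary_kraus_def p0 adj0 trace0)
    qed
    have "0 \<in> {..<r}" using assms(5) by auto
    then show ?thesis by (simp add: C_Kraus_def t)
  qed
  have hT: "trace (U \<theta> ** \<rho>0 ** adj (pdiff U \<theta> l)) = - c l" for l
    using ipa[of l] by (simp add: r0 mm_outer outer_mm trace_outer A_def[symmetric] \<phi>_def[symmetric] B_def[symmetric] a_def)
  have reC: "Re (c l) = 0" for l using cc[of l] by (simp add: complex_eq_iff)
  have "SLD_QFI (rho_out U \<rho>0) \<theta> = C_Kraus r (unitary_kraus U) \<rho>0 \<theta> \<longleftrightarrow> (\<forall>j k. Re (c j * c k) = 0)"
    by (simp add: vec_eq_iff hH hC)
  also have "\<dots> \<longleftrightarrow> (\<forall>l. c l = 0)"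
  proof
    assume h: "\<forall>j k. Re (c j * c k) = 0"
    show "\<forall>l. c l = 0"
    proof
      fix l
      have "Re (c l * c l) = 0" using h by simp
      then have "Im (c l) = 0" using reC[of l] by simp
      then show "c l = 0" using reC[of l] by (simp add: complex_eq_iff)
    qed
  qed simp
  also have "\<dots> \<longleftrightarrow> (\<forall>l. trace (U \<theta> ** \<rho>0 ** adj (pdiff U \<theta> l)) = 0)"
    by (simp add: hT)
  finally show ?thesis .
qed

end
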